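(* Let $X$ be a random vector and $\epsilon$ a random variable, independent, and let $Y=h(X)+\epsilon$ for a Borel function $h$, where $\epsilon$ has a density with respect to Lebesgue measure on $\mathbb{R}$ and $X$ has a density with respect to a $\sigma$-finite Borel measure. Let $u_{h(X)}=\sup\{u: F_{h(X)}(u)<1\}$ and suppose the CDF of $h(X)$ is continuous on the interval $(u,u_{h(X)}]$ for some $u<u_{h(X)}$. Then \[ \lambda^{(\mathrm{opt})}(Y,X)=\limsup_{p\uparrow1}\mathbb{P}\big[Y>F_Y^{\leftarrow}(p)\,\big|\,h(X)>F_{h(X)}^{\leftarrow}(p)\big], \] so $h(X)$ is an optimal extremal predictor for the extreme events of $Y$. In particular, if the tail dependence coefficient $\lambda(Y,h(X))$ exists, then $\lambda^{(\mathrm{opt})}(Y,X)=\lambda(Y,h(X))$.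
   Context: $F_\xi$ is the CDF of $\xi$ and $F_\xi^{\leftarrow}(p)=\inf\{y:F_\xi(y)\ge p\}$. For $p\in(0,1)$, $\mathcal{C}_p(X)$ is the class of Borel functions $g$ with $\mathbb{P}[g(X)>F_{g(X)}^{\leftarrow}(p)]=1-p$. The optimal extremal precision is \[ \lambda^{(\mathrm{opt})}(Y,X)=\limsup_{p\uparrow1}\sup_{g\in\mathcal{C}_p(X)}\mathbb{P}\big(Y>F_Y^{\leftarrow}(p)\mid g(X)>F_{g(X)}^{\leftarrow}(p)\big). \] A random variable $h(X)$ is an optimal extremal predictor if $\lambda^{(\mathrm{opt})}(Y,X)=\limsup_{p\uparrow1}\mathbb{P}(Y>F_Y^{\leftarrow}(p)\mid h(X)>F_{h(X)}^{\leftarrow}(p))$. The tail dependence coefficient is $\lambda(\xi,\eta)=\lim_{p\uparrow1}\mathbb{P}[\xi>F_\xi^{\leftarrow}(p)\mid \eta>F_\eta^{\leftarrow}(p)]$ when the limit exists. *)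

theory Defs
  imports "HOL-Probability.Probability"
begin

definition rv_cdf :: "'a measure \<Rightarrow> ('a \<Rightarrow> real) \<Rightarrow> real \<Rightarrow> real" where
  "rv_cdf M xi y = measure M {w \<in> space M. xi w \<le> y}"

definition quantile :: "'a measure \<Rightarrow> ('a \<Rightarrow> real) \<Rightarrow> real \<Rightarrow> real" where
  "quantile M xi p = Inf {y. rv_cdf M xi y \<ge> p}"

definition exceed :: "'a measure \<Rightarrow> ('a \<Rightarrow> real) \<Rightarrow> real \<Rightarrow> 'a set" where
  "exceed M xi p = {w \<in> space M. xi w > quantile M xi p}"

definition cond_exceed :: "'a measure \<Rightarrow> ('a \<Rightarrow> real) \<Rightarrow> ('a \<Rightarrow> real) \<Rightarrow> real \<Rightarrow> real" where
  "cond_exceed M Y eta p =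
     measure M (exceed M Y p \<inter> exceed M eta p) / measure M (exceed M eta p)"

definition class_C :: "'a measure \<Rightarrow> ('a \<Rightarrow> 'b::euclidean_space) \<Rightarrow> real \<Rightarrow> ('b \<Rightarrow> real) set" where
  "class_C M X p = {g. g \<in> borel_measurable borel \<and>
                        measure M (exceed M (\<lambda>w. g (X w)) p) = 1 - p}"

definition lambda_opt :: "'a measure \<Rightarrow> ('a \<Rightarrow> real) \<Rightarrow> ('a \<Rightarrow> 'b::euclidean_space) \<Rightarrow> ereal" where
  "lambda_opt M Y X =
     Limsup (at_left 1) (\<lambda>p. SUP g \<in> class_C M X p. ereal (cond_exceed M Y (\<lambda>w. g (X w)) p))"

definition right_endpoint :: "'a measure \<Rightarrow> ('a \<Rightarrow> real) \<Rightarrow> ereal" where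
  "right_endpoint M xi = (SUP u \<in> {u. rv_cdf M xi u < 1}. ereal u)"

end

theory Submission
  imports Defs
begin

lemma key_ineq:
  fixes M :: "'a measure" and X :: "'a \<Rightarrow> 'b::euclidean_space"
  assumes P: "prob_space M"
    and X_rv: "X \<in> borel_measurable M"
    and eps_rv: "eps \<in> borel_measurable M"
    and indep: "\<forall>A \<in> sets (borel :: 'b measure). \<forall>B \<in> sets (borel :: real measure).
                 measure M ({w \<in> space M. X w \<in> A} \<inter> {w \<in> space M. eps w \<in> B})
                   = measure M {w \<in> space M. X w \<in> A} * measure M {w \<in> space M. eps w \<in> B}"
    and h_borel: "h \<in> borel_measurable borel"
    and Y_def: "\<And>w. w \<in> space M \<Longrightarrow> Y w = h (X w) + eps w"
    and A: "A \<in> sets borel"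
    and B: "B = {x. h x > qh}"
    and eq: "measure M {w \<in> space M. X w \<in> A} = measure M {w \<in> space M. X w \<in> B}"
  shows "measure M ({w \<in> space M. Y w > t} \<inter> {w \<in> space M. X w \<in> A})
       \<le> measure M ({w \<in> space M. Y w > t} \<inter> {w \<in> space M. X w \<in> B})"
proof -
  interpret prob_space M by (rule P)
  have Bb: "B \<in> sets borel" unfolding B using h_borel by measurable
  have Y': "(\<lambda>w. h (X w) + eps w) \<in> borel_measurable M"
    using measurable_comp[OF X_rv h_borel] eps_rv unfolding comp_def by (rule borel_measurable_add)
  have Ym: "Y \<in> borel_measurable M"
    using Y' measurable_cong[of M Y "\<lambda>w. h (X w) + eps w" borel] Y_def by blast
  define E where "E = {w \<in> space M. Y w > t}"
  have Em: "E \<in> events" unfolding E_def using Ym by measurable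
  define XS where "XS S = {w \<in> space M. X w \<in> S}" for S
  have XSm: "S \<in> sets borel \<Longrightarrow> XS S \<in> events" for S
  proof -
    assume S: "S \<in> sets borel"
    have "XS S = X -` S \<inter> space M" unfolding XS_def by auto
    then show "XS S \<in> events" using measurable_sets[OF X_rv S] by simp
  qed
  define c where "c = t - qh"
  define Ec where "Ec = {w \<in> space M. eps w \<in> {c<..}}"
  have Ecm: "Ec \<in> events" unfolding Ec_def using eps_rv by measurable
  have AB: "A \<inter> B \<in> sets borel" "A - B \<in> sets borel" "B - A \<in> sets borel" using A Bb by auto
  have splitA: "measure M (E \<inter> XS A) = measure M (E \<inter> XS (A \<inter> B)) + measure M (E \<inter> XS (A - B))"
  proof -
    have "E \<inter> XS A = (E \<inter> XS (A \<inter> B)) \<union> (E \<inter> XS (A - B))" unfolding XS_def by auto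
    moreover have "(E \<inter> XS (A \<inter> B)) \<inter> (E \<inter> XS (A - B)) = {}" unfolding XS_def by auto
    ultimately show ?thesis using finite_measure_Union[of "E \<inter> XS (A \<inter> B)" "E \<inter> XS (A - B)"]
      using Em XSm AB by auto
  qed
  have splitB: "measure M (E \<inter> XS B) = measure M (E \<inter> XS (A \<inter> B)) + measure M (E \<inter> XS (B - A))"
  proof -
    have "E \<inter> XS B = (E \<inter> XS (A \<inter> B)) \<union> (E \<inter> XS (B - A))" unfolding XS_def by auto
    moreover have "(E \<inter> XS (A \<inter> B)) \<inter> (E \<inter> XS (B - A)) = {}" unfolding XS_def by auto
    ultimately show ?thesis using finite_measure_Union[of "E \<inter> XS (A \<inter> B)" "E \<inter> XS (B - A)"]
      using Em XSm AB by auto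
  qed
  have sA: "measure M (XS A) = measure M (XS (A \<inter> B)) + measure M (XS (A - B))"
  proof -
    have "XS A = XS (A \<inter> B) \<union> XS (A - B)" unfolding XS_def by auto
    moreover have "XS (A \<inter> B) \<inter> XS (A - B) = {}" unfolding XS_def by auto
    ultimately show ?thesis using finite_measure_Union[of "XS (A \<inter> B)" "XS (A - B)"]
      using XSm AB by auto
  qed
  have sB: "measure M (XS B) = measure M (XS (A \<inter> B)) + measure M (XS (B - A))"
  proof -
    have "XS B = XS (A \<inter> B) \<union> XS (B - A)" unfolding XS_def by auto
    moreover have "XS (A \<inter> B) \<inter> XS (B - A) = {}" unfolding XS_def by auto
    ultimately show ?thesis using finite_measure_Union[of "XS (A \<inter> B)" "XS (B - A)"]
      using XSm AB by auto
  qed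
  have eqd: "measure M (XS (A - B)) = measure M (XS (B - A))"
    using sA sB eq unfolding XS_def by linarith
  have i1: "measure M (E \<inter> XS (A - B)) \<le> measure M (XS (A - B) \<inter> Ec)"
  proof (rule finite_measure_mono)
    show "E \<inter> XS (A - B) \<subseteq> XS (A - B) \<inter> Ec"
      unfolding E_def XS_def Ec_def c_def B using Y_def by fastforce
  qed (use XSm AB Ecm in auto)
  have i2: "measure M (XS (B - A) \<inter> Ec) \<le> measure M (E \<inter> XS (B - A))"
  proof (rule finite_measure_mono)
    show "XS (B - A) \<inter> Ec \<subseteq> E \<inter> XS (B - A)"
      unfolding E_def XS_def Ec_def c_def B using Y_def by fastforce
  qed (use XSm AB Em in auto)
  have p1: "measure M (XS (A - B) \<inter> Ec) = measure M (XS (A - B)) * measure M Ec"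
    unfolding XS_def Ec_def by (rule indep[rule_format, OF AB(2)]) simp
  have p2: "measure M (XS (B - A) \<inter> Ec) = measure M (XS (B - A)) * measure M Ec"
    unfolding XS_def Ec_def by (rule indep[rule_format, OF AB(3)]) simp
  have pe: "measure M (XS (A - B) \<inter> Ec) = measure M (XS (B - A) \<inter> Ec)"
    using p1 p2 eqd by simp
  have "measure M (E \<inter> XS A) \<le> measure M (E \<inter> XS B)"
    using splitA splitB i1 i2 pe by linarith
  then show ?thesis unfolding E_def XS_def .
qed

lemma quantile_ok:
  fixes M :: "'a measure" and Z :: "'a \<Rightarrow> real"
  assumes P: "prob_space M"
    and Zm: "Z \<in> borel_measurable M"
    and cont: "\<exists>u. ereal u < right_endpoint M Z \<and>
                 (\<forall>x. ereal u < ereal x \<and> ereal x \<le> right_endpoint M Z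
                      \<longrightarrow> isCont (rv_cdf M Z) x)"
  shows "eventually (\<lambda>p. measure M (exceed M Z p) = 1 - p) (at_left 1)"
proof -
  interpret prob_space M by (rule P)
  define mu where "mu = distr M borel Z"
  interpret mu: real_distribution mu unfolding mu_def using Zm by simp
  define F where "F = rv_cdf M Z"
  have F_cdf: "F = cdf mu"
  proof
    fix y
    have "Z -` {..y} \<inter> space M = {w \<in> space M. Z w \<le> y}" by auto
    then show "F y = cdf mu y"
      unfolding F_def rv_cdf_def cdf_def mu_def using Zm by (simp add: measure_distr)
  qed
  obtain u where u: "ereal u < right_endpoint M Z"
    and uc: "\<And>x. ereal u < ereal x \<Longrightarrow> ereal x \<le> right_endpoint M Z \<Longrightarrow> isCont F x"
    using cont unfolding F_def by blast
  have mono: "x \<le> y \<Longrightarrow> F x \<le> F y" for x y unfolding F_cdf by (rule mu.cdf_nondecreasing)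
  obtain v where v: "F v < 1" "u < v"
    using u unfolding right_endpoint_def less_SUP_iff F_def by auto
  have Fu: "F u < 1" using mono[of u v] v by simp
  have "\<forall>\<^sub>F p in at_left 1. p \<in> {F u<..<1}" by (rule eventually_at_left_real[OF Fu])
  then show ?thesis
  proof (rule eventually_mono)
    fix p assume p: "p \<in> {F u<..<1}"
    define S where "S = {y. F y \<ge> p}"
    have "\<forall>\<^sub>F y in at_top. F y > p"
      using mu.cdf_lim_at_top_prob p unfolding F_cdf by (auto simp: order_tendsto_iff)
    then obtain y0 where "F y0 > p" by (auto simp: eventually_at_top_linorder)
    then have Sne: "S \<noteq> {}" unfolding S_def by (auto intro: less_imp_le)
    have Su: "y \<in> S \<Longrightarrow> u < y" for y
      using mono[of y u] p unfolding S_def by force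
    have bdd: "bdd_below S" using Su by (meson bdd_below.I less_imp_le)
    define q where "q = Inf S"
    have qu: "u \<le> q" unfolding q_def using Sne Su by (meson cInf_greatest less_imp_le)
    have below: "y < q \<Longrightarrow> F y < p" for y
    proof (rule ccontr)
      assume "y < q" "\<not> F y < p"
      then have "y \<in> S" unfolding S_def by simp
      then have "q \<le> y" unfolding q_def using cInf_lower[OF _ bdd] by blast
      then show False using \<open>y < q\<close> by simp
    qed
    have Fq_ge: "F q \<ge> p"
    proof -
      have "(F \<longlongrightarrow> F q) (at_right q)"
        using mu.cdf_is_right_cont[of q] unfolding F_cdf continuous_within by simp
      moreover have "\<forall>\<^sub>F y in at_right q. p \<le> F y"
      proof -
        have "\<forall>y>q. p \<le> F y"
        proof (intro allI impI)
          fix y assume "q < y"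
          then obtain s where "s \<in> S" "s < y" unfolding q_def using cInf_less_iff[OF Sne bdd] by auto
          then show "p \<le> F y" using mono[of s y] unfolding S_def by auto
        qed
        then show ?thesis by (intro eventually_at_rightI[of q "q+1"]) auto
      qed
      ultimately show ?thesis by (rule tendsto_lowerbound) simp
    qed
    have uq: "u < q"
    proof (rule ccontr)
      assume "\<not> u < q"
      then have "q = u" using qu by simp
      then show False using Fq_ge p by simp
    qed
    have qR: "ereal q \<le> right_endpoint M Z"
    proof (rule ccontr)
      assume "\<not> ?thesis"
      then have "right_endpoint M Z < ereal q" by simp
      then obtain z where z: "right_endpoint M Z < ereal z" "ereal z < ereal q"
        using ereal_dense2 by blast
      define y where "y = max z (q - 1)"
      have "y < q" using z unfolding y_def by auto
      then have "F y < 1" using below p by force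
      then have "ereal y \<le> right_endpoint M Z"
        unfolding right_endpoint_def F_def by (auto intro: SUP_upper)
      moreover have "ereal z \<le> ereal y" unfolding y_def by simp
      ultimately show False using z by (meson ereal_less_eq(3) leD order.trans)
    qed
    have ic: "isCont F q" using uc[of q] uq qR by simp
    have Fq_le: "F q \<le> p"
    proof -
      have "(F \<longlongrightarrow> F q) (at_left q)"
        using ic by (simp add: isCont_def filterlim_at_split)
      moreover have "\<forall>\<^sub>F y in at_left q. F y \<le> p"
        by (intro eventually_at_leftI[of "q - 1"]) (auto intro: less_imp_le below)
      ultimately show ?thesis by (rule tendsto_upperbound) simp
    qed
    have Fq: "F q = p" using Fq_ge Fq_le by simp
    have "exceed M Z p = space M - {w \<in> space M. Z w \<le> q}"
      unfolding exceed_def quantile_def q_def S_def F_def by auto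
    moreover have "{w \<in> space M. Z w \<le> q} \<in> events" using Zm by measurable
    ultimately have "measure M (exceed M Z p) = 1 - F q"
      unfolding F_def rv_cdf_def by (simp add: prob_compl)
    then show "measure M (exceed M Z p) = 1 - p" using Fq by simp
  qed
qed

theorem theorem3:
  fixes M :: "'a measure"
    and X :: "'a \<Rightarrow> 'b::euclidean_space"
    and eps :: "'a \<Rightarrow> real"
    and h :: "'b \<Rightarrow> real"
    and Y :: "'a \<Rightarrow> real"
  assumes P: "prob_space M"
    and X_rv: "X \<in> borel_measurable M"
    and eps_rv: "eps \<in> borel_measurable M"
    and indep: "\<forall>A \<in> sets (borel :: 'b measure). \<forall>B \<in> sets (borel :: real measure).
                 measure M ({w \<in> space M. X w \<in> A} \<inter> {w \<in> space M. eps w \<in> B})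
                   = measure M {w \<in> space M. X w \<in> A} * measure M {w \<in> space M. eps w \<in> B}"
    and h_borel: "h \<in> borel_measurable borel"
    and Y_def: "\<And>w. w \<in> space M \<Longrightarrow> Y w = h (X w) + eps w"
    and eps_density: "\<exists>f. distributed M lborel eps f"
    and X_density: "\<exists>(\<nu> :: 'b measure) f. sigma_finite_measure \<nu> \<and> sets \<nu> = sets borel
                      \<and> distributed M \<nu> X f"
    and cont: "\<exists>u. ereal u < right_endpoint M (\<lambda>w. h (X w)) \<and>
                 (\<forall>x. ereal u < ereal x \<and> ereal x \<le> right_endpoint M (\<lambda>w. h (X w))
                      \<longrightarrow> isCont (rv_cdf M (\<lambda>w. h (X w))) x)"
  shows "lambda_opt M Y X
           = Limsup (at_left 1) (\<lambda>p. ereal (cond_exceed M Y (\<lambda>w. h (X w)) p))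
         \<and> (\<forall>L. ((\<lambda>p. cond_exceed M Y (\<lambda>w. h (X w)) p) \<longlongrightarrow> L) (at_left 1)
                \<longrightarrow> lambda_opt M Y X = ereal L)"
proof -
  have hXm: "(\<lambda>w. h (X w)) \<in> borel_measurable M" using measurable_comp[OF X_rv h_borel] by (simp add: comp_def)
  have ev: "eventually (\<lambda>p. measure M (exceed M (\<lambda>w. h (X w)) p) = 1 - p) (at_left 1)"
    by (rule quantile_ok[OF P hXm cont])
  have eq: "eventually (\<lambda>p. (SUP g \<in> class_C M X p. ereal (cond_exceed M Y (\<lambda>w. g (X w)) p))
              = ereal (cond_exceed M Y (\<lambda>w. h (X w)) p)) (at_left 1)"
    using ev
  proof (rule eventually_mono)
    fix p assume hp: "measure M (exceed M (\<lambda>w. h (X w)) p) = 1 - p"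
    have hC: "h \<in> class_C M X p" unfolding class_C_def using h_borel hp by simp
    have le: "cond_exceed M Y (\<lambda>w. g (X w)) p \<le> cond_exceed M Y (\<lambda>w. h (X w)) p"
      if g: "g \<in> class_C M X p" for g
    proof -
      have gb: "g \<in> borel_measurable borel" and gp: "measure M (exceed M (\<lambda>w. g (X w)) p) = 1 - p"
        using g unfolding class_C_def by auto
      define qg where "qg = quantile M (\<lambda>w. g (X w)) p"
      define qh where "qh = quantile M (\<lambda>w. h (X w)) p"
      define A where "A = {x. g x > qg}"
      define B where "B = {x. h x > qh}"
      have Ab: "A \<in> sets borel" unfolding A_def using gb by (simp add: borel_measurable_iff_greater)
      have EA: "exceed M (\<lambda>w. g (X w)) p = {w \<in> space M. X w \<in> A}"
        unfolding exceed_def A_def qg_def by simp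
      have EB: "exceed M (\<lambda>w. h (X w)) p = {w \<in> space M. X w \<in> B}"
        unfolding exceed_def B_def qh_def by simp
      have meq: "measure M {w \<in> space M. X w \<in> A} = measure M {w \<in> space M. X w \<in> B}"
        using gp hp EA EB by simp
      have num: "measure M (exceed M Y p \<inter> {w \<in> space M. X w \<in> A})
          \<le> measure M (exceed M Y p \<inter> {w \<in> space M. X w \<in> B})"
        unfolding exceed_def
        by (rule key_ineq[OF P X_rv eps_rv indep h_borel Y_def Ab B_def meq])
      have "measure M (exceed M Y p \<inter> {w \<in> space M. X w \<in> A}) / measure M {w \<in> space M. X w \<in> A}
          \<le> measure M (exceed M Y p \<inter> {w \<in> space M. X w \<in> B}) / measure M {w \<in> space M. X w \<in> B}"
        unfolding meq by (rule divide_right_mono[OF num measure_nonneg])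
      then show ?thesis unfolding cond_exceed_def EA EB .
    qed
    show "(SUP g \<in> class_C M X p. ereal (cond_exceed M Y (\<lambda>w. g (X w)) p))
              = ereal (cond_exceed M Y (\<lambda>w. h (X w)) p)"
    proof (rule antisym)
      show "(SUP g \<in> class_C M X p. ereal (cond_exceed M Y (\<lambda>w. g (X w)) p))
              \<le> ereal (cond_exceed M Y (\<lambda>w. h (X w)) p)"
        by (rule SUP_least) (metis le ereal_less_eq(3))
      show "ereal (cond_exceed M Y (\<lambda>w. h (X w)) p)
          \<le> (SUP g \<in> class_C M X p. ereal (cond_exceed M Y (\<lambda>w. g (X w)) p))"
        by (rule SUP_upper[OF hC])
    qed
  qed
  have 1: "lambda_opt M Y X = Limsup (at_left 1) (\<lambda>p. ereal (cond_exceed M Y (\<lambda>w. h (X w)) p))"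
    unfolding lambda_opt_def by (rule Limsup_eq[OF eq])
  have 2: "lambda_opt M Y X = ereal L"
    if L: "((\<lambda>p. cond_exceed M Y (\<lambda>w. h (X w)) p) \<longlongrightarrow> L) (at_left 1)" for L
  proof -
    have "((\<lambda>p. ereal (cond_exceed M Y (\<lambda>w. h (X w)) p)) \<longlongrightarrow> ereal L) (at_left 1)"
      using L by (rule tendsto_ereal)
    then have "Limsup (at_left 1) (\<lambda>p. ereal (cond_exceed M Y (\<lambda>w. h (X w)) p)) = ereal L"
      by (intro lim_imp_Limsup) simp_all
    then show ?thesis using 1 by simp
  qed
  show ?thesis using 1 2 by blast
qed

end
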